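(* Let $k\ge0$, $n\ge1$ be integers and fix $\psi>0$. The $3$-dimensional first-order linear system $$\frac{\mathrm d}{\mathrm d\varphi}\mathbf g=\frac1\varphi\begin{pmatrix}0 & 2e^{-\varphi^2+2\varphi\psi}\varphi^{2(k+1)} & 0\\ 0&0&1\\ 0 & -2(2n-1)\varphi\psi & -[4\varphi\psi+2(n-1)]\end{pmatrix}\mathbf g$$ is stabile, as $\varphi\to\infty$, for its solution $\mathbf g(\varphi)=\big(H^k_n(\varphi^2,\psi^2),\ v(\varphi),\ \theta_\varphi\bullet v(\varphi)\big)^{\mathsf T}$, where $v(\varphi)=e^{-2\varphi\psi}\,{}_0F_1(;n;\varphi^2\psi^2)$.
   Context: ${}_0F_1(;n;z)=\sum_{i\ge0} \frac{z^i}{(n)_i\, i!}$ with $(a)_i$ the Pochhammer symbol. $H^k_n(x,\lambda)=\int_0^x y^{k}e^{-y}\,{}_0F_1(;n;\lambda y)\,\mathrm{d}y$. $\theta_\varphi=\varphi\frac{\mathrm d}{\mathrm d\varphi}$. Stabile: Let a first-order linear system in a variable $t$ have $m$-dimensional solution space with basis $f_1,\dots,f_m$ (vector-valued), and let $f_i$ be a dominant solution as $t\to\infty$, i.e. $\|f_i(t)\|\ge\|f_j(t)\|$ for all $j$ for large $t$. The system is called stabile for a particular solution $f$ (as $t\to\infty$) if $\lim_{t\to\infty}\|f_i(t)\|/\|f(t)\|<\infty$ (finite); this does not depend on the chosen basis. *)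

theory Defs
  imports "HOL-Analysis.Analysis"
begin

definition hyp0F1 :: "real \<Rightarrow> real \<Rightarrow> real" where
  "hyp0F1 n z = (\<Sum>i. z ^ i / (pochhammer n i * fact i))"

definition H :: "nat \<Rightarrow> nat \<Rightarrow> real \<Rightarrow> real \<Rightarrow> real" where
  "H k n x lam = integral {0..x} (\<lambda>y. y ^ k * exp (- y) * hyp0F1 (real n) (lam * y))"

definition theta :: "(real \<Rightarrow> real) \<Rightarrow> real \<Rightarrow> real" where
  "theta v \<phi> = \<phi> * deriv v \<phi>"

definition sol_space :: "(real \<Rightarrow> real^'n^'n) \<Rightarrow> (real \<Rightarrow> real^'n) set" where
  "sol_space M = {g. \<forall>t>0. (g has_vector_derivative (M t *v g t)) (at t)}"

definition sol_basis :: "(real \<Rightarrow> real^'n^'n) \<Rightarrow> nat \<Rightarrow> (nat \<Rightarrow> real \<Rightarrow> real^'n) \<Rightarrow> bool" where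
  "sol_basis M m F \<longleftrightarrow>
     (\<forall>j<m. F j \<in> sol_space M) \<and>
     (\<forall>c. (\<forall>t>0. (\<Sum>j<m. c j *\<^sub>R F j t) = 0) \<longrightarrow> (\<forall>j<m. c j = 0)) \<and>
     (\<forall>g\<in>sol_space M. \<exists>c. \<forall>t>0. g t = (\<Sum>j<m. c j *\<^sub>R F j t))"

definition stabile :: "(real \<Rightarrow> real^'n^'n) \<Rightarrow> (real \<Rightarrow> real^'n) \<Rightarrow> bool" where
  "stabile M f \<longleftrightarrow> f \<in> sol_space M \<and>
     (\<exists>F i. sol_basis M CARD('n) F \<and> i < CARD('n) \<and>
        (\<forall>\<^sub>F t in at_top. \<forall>j<CARD('n). norm (F j t) \<le> norm (F i t)) \<and>
        (\<exists>L::real. ((\<lambda>t. norm (F i t) / norm (f t)) \<longlongrightarrow> L) at_top))"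

definition sysM :: "nat \<Rightarrow> nat \<Rightarrow> real \<Rightarrow> real \<Rightarrow> real^3^3" where
  "sysM k n \<psi> \<phi> = (1 / \<phi>) *\<^sub>R (vector [
      vector [0, 2 * exp (- (\<phi>^2) + 2 * \<phi> * \<psi>) * \<phi> ^ (2 * (k + 1)), 0],
      vector [0, 0, 1],
      vector [0, - 2 * (2 * real n - 1) * \<phi> * \<psi>, - (4 * \<phi> * \<psi> + 2 * (real n - 1))]] :: real^3^3)"

definition vfun :: "nat \<Rightarrow> real \<Rightarrow> real \<Rightarrow> real" where
  "vfun n \<psi> \<phi> = exp (- 2 * \<phi> * \<psi>) * hyp0F1 (real n) (\<phi>^2 * \<psi>^2)"

definition gsol :: "nat \<Rightarrow> nat \<Rightarrow> real \<Rightarrow> real \<Rightarrow> real^3" where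
  "gsol k n \<psi> \<phi> = vector [H k n (\<phi>^2) (\<psi>^2), vfun n \<psi> \<phi>, theta (vfun n \<psi>) \<phi>]"

end

theory Submission
  imports Defs
begin

lemma cross: "(B::real) \<noteq> 0 \<Longrightarrow> D \<noteq> 0 \<Longrightarrow> A * D = C * B \<Longrightarrow> A / B = C / D"
  by (simp add: frac_eq_eq)

lemma alg2: fixes y P2 F a i :: real assumes "a>0" "i\<ge>0" "P2>0" "F>0"
  shows "y / (P2*F) / (a*(a+1)) + y / ((a+1)*P2*((i+1)*F)) - y / (a*((a+1)*P2/(a+1+i))*((i+1)*F)) = 0"
proof -
  define b where "b = a+1"
  define j where "j = i+1"
  have c: "a+1+i = a + j" unfolding j_def by simp
  have "a \<noteq> 0" "b \<noteq> 0" "j \<noteq> 0" "a + j \<noteq> 0" "P2 \<noteq> 0" "F \<noteq> 0" using assms unfolding b_def j_def by auto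
  then have "y / (P2*F) / (a*b) + y / (b*P2*(j*F)) - y / (a*(b*P2/(a+j))*(j*F)) = 0"
    by (simp add: field_simps)
  then show ?thesis unfolding c b_def j_def .
qed

lemma poch_ge1: "a \<ge> 1 \<Longrightarrow> pochhammer (a::real) i \<ge> 1"
proof (induction i)
  case 0 then show ?case by simp
next
  case (Suc i)
  have "pochhammer a (Suc i) = (a + of_nat i) * pochhammer a i" by (simp add: pochhammer_rec')
  moreover have "a + of_nat i \<ge> 1" using Suc by simp
  moreover have "1*1 \<le> (a + of_nat i) * pochhammer a i"
    by (rule mult_mono) (use Suc in auto)
  ultimately show ?case by simp
qed

lemma hyp_summable: assumes "a \<ge> 1" shows "summable (\<lambda>i. (x::real) ^ i / (pochhammer a i * fact i))"
proof (rule summable_comparison_test[OF _ summable_exp[of "\<bar>x\<bar>"]])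
  show "\<exists>N. \<forall>n\<ge>N. norm (x ^ n / (pochhammer a n * fact n)) \<le> inverse (fact n) * \<bar>x\<bar> ^ n"
  proof (intro exI allI impI)
    fix n
    have p: "pochhammer a n \<ge> 1" using poch_ge1 assms by auto
    have "norm (x ^ n / (pochhammer a n * fact n)) = \<bar>x\<bar>^n / (pochhammer a n * fact n)"
      using p by (simp add: abs_mult power_abs)
    also have "\<dots> \<le> \<bar>x\<bar>^n / (1 * fact n)"
      using p by (intro divide_left_mono mult_right_mono) auto
    finally show "norm (x ^ n / (pochhammer a n * fact n)) \<le> inverse (fact n) * \<bar>x\<bar> ^ n"
      by (simp add: field_simps)
  qed
qed

lemma hyp_deriv: assumes "a \<ge> 1"
  shows "(hyp0F1 a has_real_derivative hyp0F1 (a+1) x / a) (at x)"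
proof -
  let ?c = "\<lambda>i. 1 / (pochhammer a i * fact i)"
  have s: "\<And>y. summable (\<lambda>i. ?c i * y ^ i)" using hyp_summable[OF assms] by simp
  have e: "hyp0F1 a = (\<lambda>x. \<Sum>i. ?c i * x ^ i)" unfolding hyp0F1_def by (auto intro!: ext)
  have d: "diffs ?c i * x ^ i = (x ^ i / (pochhammer (a+1) i * fact i)) / a" for i
  proof -
    have pp: "pochhammer (a+1) i > 0" using poch_ge1[of "a+1" i] assms by simp
    have "diffs ?c i = real (Suc i) / (a * pochhammer (a+1) i * (real (Suc i) * fact i))"
      by (simp add: diffs_def pochhammer_rec mult.assoc)
    also have "\<dots> = 1 / (a * pochhammer (a+1) i * fact i)"
      using pp assms by (intro cross) auto
    finally show ?thesis by simp
  qed
  have "(\<Sum>i. diffs ?c i * x ^ i) = hyp0F1 (a+1) x / a"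
    unfolding d hyp0F1_def using suminf_divide[OF hyp_summable[of "a+1" x], of a] assms by simp
  then show ?thesis using termdiffs_strong_converges_everywhere[of ?c x, OF s] e by simp
qed

lemma hyp_ge_term: assumes "a \<ge> 1" "x \<ge> 0" shows "hyp0F1 a x \<ge> (x::real) ^ i / (pochhammer a i * fact i)"
proof -
  have "(\<Sum>j\<in>{i}. x ^ j / (pochhammer a j * fact j)) \<le> hyp0F1 a x"
  proof -
    have pp: "\<And>j. pochhammer a j > 0" using poch_ge1[OF assms(1)] by (meson less_le_trans zero_less_one)
    show ?thesis
    unfolding hyp0F1_def using hyp_summable[OF assms(1)] assms pp
    by (intro sum_le_suminf) (auto intro!: divide_nonneg_pos)
  qed
  then show ?thesis by simp
qed

lemma hyp_ge1: assumes "a \<ge> 1" "x \<ge> 0" shows "hyp0F1 a x \<ge> 1"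
  using hyp_ge_term[OF assms, of 0] by simp

lemma hyp_ode: assumes "a \<ge> 1"
  shows "x * hyp0F1 (a+2) x / (a*(a+1)) + hyp0F1 (a+1) x - hyp0F1 a x = 0"
proof -
  define f where "f b i = x ^ i / (pochhammer b i * fact i)" for b i
  have sa: "summable (f b)" if "b \<ge> 1" for b unfolding f_def using hyp_summable[OF that] .
  have A: "hyp0F1 b x = 1 + (\<Sum>i. f b (Suc i))" if "b \<ge> 1" for b
    using suminf_split_head[OF sa[OF that]] unfolding hyp0F1_def f_def by simp
  have B: "x * hyp0F1 (a+2) x / (a*(a+1)) = (\<Sum>i. x * f (a+2) i / (a*(a+1)))"
    unfolding hyp0F1_def f_def[symmetric] using sa[of "a+2"] assms
    by (simp add: suminf_mult suminf_divide summable_mult)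
  have T: "x * f (a+2) i / (a*(a+1)) + f (a+1) (Suc i) - f a (Suc i) = 0" for i
  proof -
    define P2 where "P2 = pochhammer (a+2) i"
    have P2pos: "P2 > 0" using poch_ge1[of "a+2" i] assms unfolding P2_def by simp
    have r1: "pochhammer (a+1) (Suc i) = (a+1) * P2" unfolding P2_def by (simp add: pochhammer_rec add.assoc)
    have r2: "(a+1) * P2 = (a+1+real i) * pochhammer (a+1) i"
      using r1 by (simp add: pochhammer_rec' add_ac)
    have r3: "pochhammer a (Suc i) = a * pochhammer (a+1) i" by (simp add: pochhammer_rec)
    have nz: "a+1+real i \<noteq> 0" using assms by linarith
    have Q: "pochhammer (a+1) i = (a+1) * P2 / (a+1+real i)" using r2 nz
      by (simp add: eq_divide_eq)
    have fi: "fact (Suc i) = (real i + 1) * fact i" by simp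
    have e1: "x * f (a+2) i / (a*(a+1)) = x ^ Suc i / (P2 * fact i) / (a*(a+1))"
      unfolding f_def P2_def[symmetric] by (simp only: power_Suc times_divide_eq_right)
    have e2: "f (a+1) (Suc i) = x ^ Suc i / ((a+1) * P2 * ((real i + 1) * fact i))"
      unfolding f_def r1 fi by (rule refl)
    have e3: "f a (Suc i) = x ^ Suc i / (a * ((a+1) * P2 / (a+1+real i)) * ((real i + 1) * fact i))"
      unfolding f_def r3 fi Q by (rule refl)
    show ?thesis unfolding e1 e2 e3
      by (rule alg2) (use assms P2pos in auto)
  qed
  have "x * hyp0F1 (a+2) x / (a*(a+1)) + hyp0F1 (a+1) x - hyp0F1 a x
        = (\<Sum>i. x * f (a+2) i / (a*(a+1))) + (\<Sum>i. f (a+1) (Suc i)) - (\<Sum>i. f a (Suc i))"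
    using A[of a] A[of "a+1"] B assms by simp
  also have "\<dots> = (\<Sum>i. x * f (a+2) i / (a*(a+1)) + f (a+1) (Suc i) - f a (Suc i))"
  proof -
    have s1: "summable (\<lambda>i. x * f (a+2) i / (a*(a+1)))"
      using sa[of "a+2"] assms by (intro summable_divide summable_mult) auto
    have s2: "summable (\<lambda>i. f (a+1) (Suc i))" using sa[of "a+1"] assms by (simp add: summable_Suc_iff)
    have s3: "summable (\<lambda>i. f a (Suc i))" using sa[of "a"] assms by (simp add: summable_Suc_iff)
    show ?thesis using suminf_add[OF s1 s2] suminf_diff[OF summable_add[OF s1 s2] s3] by simp
  qed
  also have "\<dots> = 0" unfolding T by simp
  finally show ?thesis .
qed


lemma vec3_eq: "vector [a, b, c] = a *\<^sub>R (vector [1,0,0] :: real^3) + b *\<^sub>R vector [0,1,0] + c *\<^sub>R vector [0,0,1]"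
  unfolding vec_eq_iff
proof
  fix i :: 3
  show "vector [a, b, c] $ i = (a *\<^sub>R (vector [1,0,0] :: real^3) + b *\<^sub>R vector [0,1,0] + c *\<^sub>R vector [0,0,1]) $ i"
    using exhaust_3[of i] by auto
qed

lemma vec3_deriv:
  assumes "(a has_real_derivative a') (at t)" "(b has_real_derivative b') (at t)" "(c has_real_derivative c') (at t)"
  shows "((\<lambda>t. vector [a t, b t, c t] :: real^3) has_vector_derivative vector [a', b', c']) (at t)"
proof -
  have "((\<lambda>t. a t *\<^sub>R (vector [1,0,0] :: real^3) + b t *\<^sub>R vector [0,1,0] + c t *\<^sub>R vector [0,0,1])
     has_vector_derivative (a' *\<^sub>R (vector [1,0,0] :: real^3) + b' *\<^sub>R vector [0,1,0] + c' *\<^sub>R vector [0,0,1])) (at t)"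
    using assms by (auto intro!: derivative_eq_intros)
  then show ?thesis by (simp only: vec3_eq[symmetric])
qed

lemma comp_deriv:
  assumes "(g has_vector_derivative g') (at t)"
  shows "((\<lambda>t. g t $ i) has_real_derivative g' $ i) (at t)"
proof -
  have "((\<lambda>t. g t $ i) has_derivative (\<lambda>h. (h *\<^sub>R g') $ i)) (at t)"
    using bounded_linear.has_derivative[OF bounded_linear_vec_nth assms[unfolded has_vector_derivative_def]] .
  moreover have "(\<lambda>h. (h *\<^sub>R g') $ i) = (*) (g' $ i)" by (auto simp: fun_eq_iff)
  ultimately show ?thesis by (simp add: has_field_derivative_def)
qed

definition acoef :: "nat \<Rightarrow> real \<Rightarrow> real \<Rightarrow> real" where
  "acoef k \<psi> \<phi> = (1/\<phi>) * (2 * exp (- (\<phi>^2) + 2 * \<phi> * \<psi>) * \<phi> ^ (2 * (k + 1)))"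
definition alph :: "nat \<Rightarrow> real \<Rightarrow> real \<Rightarrow> real" where
  "alph n \<psi> \<phi> = (1/\<phi>) * (- 2 * (2 * real n - 1) * \<phi> * \<psi>)"
definition bet :: "nat \<Rightarrow> real \<Rightarrow> real \<Rightarrow> real" where
  "bet n \<psi> \<phi> = (1/\<phi>) * (- (4 * \<phi> * \<psi> + 2 * (real n - 1)))"

lemma sysM_mult: "sysM k n \<psi> \<phi> *v g =
   vector [acoef k \<psi> \<phi> * g$2, g$3 / \<phi>, alph n \<psi> \<phi> * g$2 + bet n \<psi> \<phi> * g$3]"
  unfolding sysM_def acoef_def alph_def bet_def vec_eq_iff
  apply (rule allI)
  subgoal for i using exhaust_3[of i]
    by (auto simp: matrix_vector_mult_def sum_3 divide_simps algebra_simps scaleR_matrix_vector_assoc[symmetric])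
  done

lemma in_sol_space:
  assumes "\<And>t. t > 0 \<Longrightarrow> (u has_real_derivative acoef k \<psi> t * x t) (at t)"
    "\<And>t. t > 0 \<Longrightarrow> (x has_real_derivative y t / t) (at t)"
    "\<And>t. t > 0 \<Longrightarrow> (y has_real_derivative alph n \<psi> t * x t + bet n \<psi> t * y t) (at t)"
  shows "(\<lambda>t. vector [u t, x t, y t]) \<in> sol_space (sysM k n \<psi>)"
  unfolding sol_space_def using assms by (auto simp: sysM_mult intro!: vec3_deriv)

lemma sol_space_comp:
  assumes "g \<in> sol_space (sysM k n \<psi>)" "t > 0"
  shows "((\<lambda>t. g t $ 1) has_real_derivative acoef k \<psi> t * g t $ 2) (at t)"
    "((\<lambda>t. g t $ 2) has_real_derivative g t $ 3 / t) (at t)"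
    "((\<lambda>t. g t $ 3) has_real_derivative alph n \<psi> t * g t $ 2 + bet n \<psi> t * g t $ 3) (at t)"
proof -
  have d: "(g has_vector_derivative vector [acoef k \<psi> t * g t$2, g t$3 / t, alph n \<psi> t * g t$2 + bet n \<psi> t * g t$3]) (at t)"
    using assms unfolding sol_space_def by (simp add: sysM_mult)
  show "((\<lambda>t. g t $ 1) has_real_derivative acoef k \<psi> t * g t $ 2) (at t)" using comp_deriv[OF d, of 1] by simp
  show "((\<lambda>t. g t $ 2) has_real_derivative g t $ 3 / t) (at t)" using comp_deriv[OF d, of 2] by simp
  show "((\<lambda>t. g t $ 3) has_real_derivative alph n \<psi> t * g t $ 2 + bet n \<psi> t * g t $ 3) (at t)"
    using comp_deriv[OF d, of 3] by simp
qed


lemma hyp_chain: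
  assumes "a \<ge> 1" "(g has_real_derivative g') (at x)"
  shows "((\<lambda>x. hyp0F1 a (g x)) has_real_derivative hyp0F1 (a+1) (g x) / a * g') (at x)"
  using DERIV_chain2[OF hyp_deriv[OF assms(1)] assms(2)] .

lemma hyp_cont: "a \<ge> 1 \<Longrightarrow> isCont (hyp0F1 a) x"
  using hyp_deriv DERIV_isCont by blast

definition "F0 n \<psi> \<phi> = hyp0F1 (real n) (\<phi>^2*\<psi>^2)"
definition "F1 n \<psi> \<phi> = hyp0F1 (real n + 1) (\<phi>^2*\<psi>^2) / real n"
definition "F2 n \<psi> \<phi> = hyp0F1 (real n + 2) (\<phi>^2*\<psi>^2) / (real n * (real n + 1))"

lemma F0_deriv: "n \<ge> 1 \<Longrightarrow> (F0 n \<psi> has_real_derivative F1 n \<psi> \<phi> * (2*\<phi>*\<psi>^2)) (at \<phi>)"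
proof -
  assume n: "n \<ge> 1"
  have "((\<lambda>\<phi>. \<phi>^2*\<psi>^2) has_real_derivative 2*\<phi>*\<psi>^2) (at \<phi>)"
    by (auto intro!: derivative_eq_intros)
  from hyp_chain[OF _ this, of "real n"] n show ?thesis
    unfolding F0_def F1_def by (simp add: fun_eq_iff)
qed

lemma F1_deriv: "n \<ge> 1 \<Longrightarrow> (F1 n \<psi> has_real_derivative F2 n \<psi> \<phi> * (2*\<phi>*\<psi>^2)) (at \<phi>)"
proof -
  assume n: "n \<ge> 1"
  have "((\<lambda>\<phi>. \<phi>^2*\<psi>^2) has_real_derivative 2*\<phi>*\<psi>^2) (at \<phi>)"
    by (auto intro!: derivative_eq_intros)
  from hyp_chain[OF _ this, of "real n + 1"] n
  have "((\<lambda>\<phi>. hyp0F1 (real n + 1) (\<phi>^2*\<psi>^2)) has_real_derivative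
        hyp0F1 (real n + 2) (\<phi>^2*\<psi>^2) / (real n + 1) * (2*\<phi>*\<psi>^2)) (at \<phi>)"
    by (simp add: add.assoc)
  from DERIV_cdivide[OF this, of "real n"] show ?thesis
    unfolding F1_def F2_def by (simp add: field_simps)
qed

lemma F_ode: "n \<ge> 1 \<Longrightarrow> F0 n \<psi> \<phi> = \<phi>^2*\<psi>^2 * F2 n \<psi> \<phi> + real n * F1 n \<psi> \<phi>"
  using hyp_ode[of "real n" "\<phi>^2*\<psi>^2"] unfolding F0_def F1_def F2_def
  by (simp add: add.assoc)

definition "v1d n \<psi> \<phi> = exp (-2*\<phi>*\<psi>) * (-2*\<psi>*F0 n \<psi> \<phi> + 2*\<phi>*\<psi>^2*F1 n \<psi> \<phi>)"
definition "y1 n \<psi> \<phi> = exp (-2*\<phi>*\<psi>) * (2*\<phi>^2*\<psi>^2*F1 n \<psi> \<phi> - 2*\<phi>*\<psi>*F0 n \<psi> \<phi>)"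

lemma vfun_F0: "vfun n \<psi> = (\<lambda>\<phi>. exp (-2*\<phi>*\<psi>) * F0 n \<psi> \<phi>)"
  unfolding vfun_def F0_def by simp

lemma vfun_deriv: "n \<ge> 1 \<Longrightarrow> (vfun n \<psi> has_real_derivative v1d n \<psi> \<phi>) (at \<phi>)"
  unfolding vfun_F0 v1d_def
  by (auto intro!: derivative_eq_intros F0_deriv simp: algebra_simps)

lemma theta_eq: "n \<ge> 1 \<Longrightarrow> theta (vfun n \<psi>) = y1 n \<psi>"
proof (rule ext)
  fix \<phi> assume n: "n \<ge> 1"
  have dv: "deriv (vfun n \<psi>) \<phi> = v1d n \<psi> \<phi>" using DERIV_imp_deriv[OF vfun_deriv[OF n]] .
  show "theta (vfun n \<psi>) \<phi> = y1 n \<psi> \<phi>"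
    unfolding theta_def dv v1d_def y1_def by (simp add: algebra_simps power2_eq_square)
qed

lemma ode_alg:
  fixes E P S N G0 G1 G2 :: real
  assumes "G0 = P^2 * S^2 * G2 + N * G1"
  shows "E*(-2*S)*(2*P^2*S^2*G1 - 2*P*S*G0) + E*(4*P*S^2*G1 + 2*P^2*S^2*(G2*(2*P*S^2)) - 2*S*G0 - 2*P*S*(G1*(2*P*S^2)))
   = (-2*(2*N-1)*S) * (E*G0) + (-4*S)*(E*(2*P^2*S^2*G1 - 2*P*S*G0)) + (-2*(N-1))*(E*(2*P*S^2*G1 - 2*S*G0))"
  unfolding assms by algebra

lemma y1_deriv: assumes "n \<ge> 1" "\<phi> > 0"
  shows "(y1 n \<psi> has_real_derivative alph n \<psi> \<phi> * vfun n \<psi> \<phi> + bet n \<psi> \<phi> * y1 n \<psi> \<phi>) (at \<phi>)"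
proof -
  let ?E = "exp (-2*\<phi>*\<psi>)"
  have d: "(y1 n \<psi> has_real_derivative
     ?E*(-2*\<psi>)*(2*\<phi>^2*\<psi>^2*F1 n \<psi> \<phi> - 2*\<phi>*\<psi>*F0 n \<psi> \<phi>) +
     ?E*(4*\<phi>*\<psi>^2*F1 n \<psi> \<phi> + 2*\<phi>^2*\<psi>^2*(F2 n \<psi> \<phi>*(2*\<phi>*\<psi>^2)) - 2*\<psi>*F0 n \<psi> \<phi>
        - 2*\<phi>*\<psi>*(F1 n \<psi> \<phi>*(2*\<phi>*\<psi>^2)))) (at \<phi>)"
    unfolding y1_def[abs_def]
    by (auto intro!: derivative_eq_intros F0_deriv F1_deriv assms simp: algebra_simps)
  have r: "alph n \<psi> \<phi> * vfun n \<psi> \<phi> + bet n \<psi> \<phi> * y1 n \<psi> \<phi> =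
     (-2*(2*real n-1)*\<psi>) * (?E*F0 n \<psi> \<phi>) + (-4*\<psi>)*(?E*(2*\<phi>^2*\<psi>^2*F1 n \<psi> \<phi> - 2*\<phi>*\<psi>*F0 n \<psi> \<phi>))
     + (-2*(real n-1))*(?E*(2*\<phi>*\<psi>^2*F1 n \<psi> \<phi> - 2*\<psi>*F0 n \<psi> \<phi>))"
    unfolding alph_def bet_def vfun_F0 y1_def using assms(2)
    by (simp add: field_simps power2_eq_square)
  have eq: "?E*(-2*\<psi>)*(2*\<phi>^2*\<psi>^2*F1 n \<psi> \<phi> - 2*\<phi>*\<psi>*F0 n \<psi> \<phi>) +
     ?E*(4*\<phi>*\<psi>^2*F1 n \<psi> \<phi> + 2*\<phi>^2*\<psi>^2*(F2 n \<psi> \<phi>*(2*\<phi>*\<psi>^2)) - 2*\<psi>*F0 n \<psi> \<phi>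
        - 2*\<phi>*\<psi>*(F1 n \<psi> \<phi>*(2*\<phi>*\<psi>^2))) =
     (-2*(2*real n-1)*\<psi>) * (?E*F0 n \<psi> \<phi>) + (-4*\<psi>)*(?E*(2*\<phi>^2*\<psi>^2*F1 n \<psi> \<phi> - 2*\<phi>*\<psi>*F0 n \<psi> \<phi>))
     + (-2*(real n-1))*(?E*(2*\<phi>*\<psi>^2*F1 n \<psi> \<phi> - 2*\<psi>*F0 n \<psi> \<phi>))"
    by (rule ode_alg[OF F_ode[OF assms(1)]])
  show ?thesis using d unfolding r eq .
qed


definition "hfun k n \<psi> y = y ^ k * exp (- y) * hyp0F1 (real n) (\<psi>^2 * y)"

lemma hfun_cont: "n \<ge> 1 \<Longrightarrow> isCont (hfun k n \<psi>) y"
  unfolding hfun_def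
  by (intro continuous_intros isCont_o2[OF _ hyp_cont]) auto

lemma hfun_cont_on: "n \<ge> 1 \<Longrightarrow> continuous_on S (hfun k n \<psi>)"
  using hfun_cont by (simp add: continuous_at_imp_continuous_on)

lemma hfun_pos: "n \<ge> 1 \<Longrightarrow> y > 0 \<Longrightarrow> hfun k n \<psi> y > 0"
  unfolding hfun_def using hyp_ge1[of "real n" "\<psi>^2*y"] by (auto intro!: mult_pos_pos)

lemma H_eq: "H k n x (\<psi>^2) = integral {0..x} (hfun k n \<psi>)"
  unfolding H_def hfun_def by simp

lemma H_deriv: assumes "n \<ge> 1" "x > 0"
  shows "((\<lambda>x. H k n x (\<psi>^2)) has_real_derivative hfun k n \<psi> x) (at x)"
proof -
  have "((\<lambda>x. integral {0..x} (hfun k n \<psi>)) has_real_derivative hfun k n \<psi> x) (at x within {0..x+1})"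
    using assms by (intro integral_has_real_derivative hfun_cont_on) auto
  moreover have "at x within {0..x+1} = at x"
    using assms by (intro at_within_interior) auto
  ultimately show ?thesis unfolding H_eq by simp
qed

lemma H_nonneg: assumes "n \<ge> 1" "x \<ge> 0" shows "H k n x (\<psi>^2) \<ge> 0"
  unfolding H_eq using assms hfun_pos[OF assms(1)]
  by (intro integral_nonneg integrable_continuous_real hfun_cont_on)
     (auto simp: hfun_def intro!: mult_nonneg_nonneg order_trans[OF zero_le_one hyp_ge1])

definition "H1 k n \<psi> \<phi> = H k n (\<phi>^2) (\<psi>^2)"

lemma H1_deriv: assumes "n \<ge> 1" "\<phi> > 0"
  shows "(H1 k n \<psi> has_real_derivative acoef k \<psi> \<phi> * vfun n \<psi> \<phi>) (at \<phi>)"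
proof -
  have d1: "((\<lambda>\<phi>. \<phi>^2) has_real_derivative 2*\<phi>) (at \<phi>)" by (auto intro!: derivative_eq_intros)
  have "(H1 k n \<psi> has_real_derivative hfun k n \<psi> (\<phi>^2) * (2*\<phi>)) (at \<phi>)"
    unfolding H1_def using DERIV_chain2[OF H_deriv[OF assms(1)] d1] assms by simp
  moreover have "hfun k n \<psi> (\<phi>^2) * (2*\<phi>) = acoef k \<psi> \<phi> * vfun n \<psi> \<phi>"
  proof -
    define e where "e = exp (2*\<phi>*\<psi>)"
    have e: "e > 0" unfolding e_def by simp
    have e1: "exp (- (\<phi>^2) + 2*\<phi>*\<psi>) = exp (- (\<phi>^2)) * e" unfolding e_def exp_add[symmetric] by simp
    have e2: "exp (- 2*\<phi>*\<psi>) = 1 / e" unfolding e_def by (simp add: exp_minus')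
    have p: "\<phi> ^ (2 * (k + 1)) = (\<phi>^2)^k * \<phi>^2" by (simp add: power_mult[symmetric] power_add[symmetric])
    show ?thesis unfolding hfun_def acoef_def vfun_def e1 e2 p using e assms(2)
      by (simp add: field_simps power2_eq_square)
  qed
  ultimately show ?thesis by simp
qed

lemma y1_v1d: "y1 n \<psi> \<phi> = \<phi> * v1d n \<psi> \<phi>"
  unfolding y1_def v1d_def by (simp add: algebra_simps power2_eq_square)

lemma gsol_eq: "n \<ge> 1 \<Longrightarrow> gsol k n \<psi> = (\<lambda>t. vector [H1 k n \<psi> t, vfun n \<psi> t, y1 n \<psi> t])"
  unfolding gsol_def H1_def using theta_eq by auto

lemma gsol_sol: assumes "n \<ge> 1" shows "gsol k n \<psi> \<in> sol_space (sysM k n \<psi>)"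
  unfolding gsol_eq[OF assms]
proof (rule in_sol_space)
  fix t :: real assume t: "t > 0"
  show "(H1 k n \<psi> has_real_derivative acoef k \<psi> t * vfun n \<psi> t) (at t)" using H1_deriv assms t by blast
  show "(vfun n \<psi> has_real_derivative y1 n \<psi> t / t) (at t)"
    using vfun_deriv[OF assms, of \<psi> t] t by (simp add: y1_v1d)
  show "(y1 n \<psi> has_real_derivative alph n \<psi> t * vfun n \<psi> t + bet n \<psi> t * y1 n \<psi> t) (at t)"
    using y1_deriv assms t by blast
qed


lemma key_e: assumes "i \<ge> (1::nat)" shows "exp 1 * real i ^ (i+1) \<le> real (i+1) ^ (i+1)"
proof -
  have ip: "real i > 0" using assms by simp
  define q where "q = real (i+1) / real i"
  have qp: "q > 0" unfolding q_def using ip by simp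
  have "ln (real i / real (i+1)) \<le> real i / real (i+1) - 1" using ip by (intro ln_le_minus_one) simp
  also have "\<dots> = - 1 / real (i+1)" by (simp add: field_simps)
  finally have l1: "ln (real i / real (i+1)) \<le> - 1 / real (i+1)" .
  have "ln (real i / real (i+1)) = - ln q" unfolding q_def using ip by (simp add: ln_div)
  with l1 have "ln q \<ge> 1 / real (i+1)" by simp
  then have "real (i+1) * ln q \<ge> 1" by (simp add: field_simps)
  then have e1: "exp 1 \<le> exp (real (i+1) * ln q)" by simp
  have "real (i+1) * ln q = ln (q ^ (i+1))" by (simp only: ln_realpow)
  then have e2: "exp (real (i+1) * ln q) = q ^ (i+1)" using qp by simp
  have e3: "q ^ (i+1) = real (i+1) ^ (i+1) / real i ^ (i+1)" unfolding q_def by (simp add: power_divide)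
  have "exp 1 \<le> real (i+1) ^ (i+1) / real i ^ (i+1)" using e1 unfolding e2 e3 .
  then show ?thesis using ip by (simp add: field_simps)
qed

lemma fact_le: assumes "i \<ge> (1::nat)" shows "fact i * exp (real i - 1) \<le> real i ^ (i+1)"
  using assms
proof (induction i rule: nat_induct_at_least)
  case base then show ?case by simp
next
  case (Suc i)
  have "fact (Suc i) * exp (real (Suc i) - 1) = real (i+1) * (fact i * exp (real i - 1)) * exp 1"
    by (simp add: exp_add[symmetric] algebra_simps)
  also have "\<dots> \<le> real (i+1) * real i ^ (i+1) * exp 1"
    using Suc.IH by (intro mult_right_mono mult_left_mono) auto
  also have "\<dots> = real (i+1) * (exp 1 * real i ^ (i+1))" by simp
  also have "\<dots> \<le> real (i+1) * real (i+1) ^ (i+1)"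
    using key_e[OF Suc.hyps] by (intro mult_left_mono) auto
  also have "\<dots> = real (Suc i) ^ (Suc i + 1)" by simp
  finally show ?case .
qed

lemma poch_le_fact: assumes "n \<ge> (1::nat)" shows "pochhammer (real n) i \<le> fact (i+n)"
proof (induction i)
  case 0 then show ?case by (simp add: fact_ge_1)
next
  case (Suc i)
  have "pochhammer (real n) (Suc i) = (real n + real i) * pochhammer (real n) i" by (simp add: pochhammer_rec')
  also have "\<dots> \<le> (real n + real i + 1) * fact (i+n)"
    using Suc.IH assms by (intro mult_mono) (auto intro: less_imp_le[OF pochhammer_pos])
  also have "\<dots> = fact (Suc i + n)" by (simp add: algebra_simps)
  finally show ?case .
qed

lemma fact_add_le: "fact (i+n) \<le> fact i * (real i + real n) ^ n"
proof (induction n)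
  case 0 then show ?case by simp
next
  case (Suc n)
  have "fact (i + Suc n) = (real i + real n + 1) * fact (i+n)" by (simp add: algebra_simps)
  also have "\<dots> \<le> (real i + real n + 1) * (fact i * (real i + real n) ^ n)"
    using Suc.IH by (intro mult_left_mono) auto
  also have "\<dots> \<le> (real i + real n + 1) * (fact i * (real i + real (Suc n)) ^ n)"
    by (intro mult_left_mono power_mono) auto
  also have "\<dots> = fact i * (real i + real (Suc n)) ^ Suc n" by (simp add: algebra_simps)
  finally show ?case .
qed


lemma F0_lower: assumes n: "n \<ge> 1" and z: "z \<ge> 1"
  shows "hyp0F1 (real n) (z^2) \<ge> exp (2*z - 4) / (z^2 * (z + real n)^n)"
proof -
  define i where "i = nat \<lfloor>z\<rfloor>"
  have iz: "real i \<le> z" "z < real i + 1" unfolding i_def using z by linarith+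
  have i1: "i \<ge> 1" unfolding i_def using z by linarith
  have ip: "real i > 0" using i1 by simp
  define B where "B = (real i + real n)^n"
  have Bp: "B > 0" unfolding B_def using ip by simp
  define X where "X = exp (real i - 1)"
  define P where "P = real i ^ i"
  have Pp: "P > 0" unfolding P_def using ip by simp
  have Xp: "X > 0" unfolding X_def by simp
  have pp: "pochhammer (real n) i > 0" using n by (intro pochhammer_pos) simp
  have fp: "fact i > (0::real)" by simp
  have t: "(z^2)^i / (pochhammer (real n) i * fact i) \<le> hyp0F1 (real n) (z^2)"
    using hyp_ge_term[of "real n" "z^2" i] n by simp
  have f1: "fact i \<le> P * real i / X"
    using fact_le[OF i1] Xp unfolding P_def X_def by (simp add: field_simps)
  have D1: "pochhammer (real n) i * fact i \<le> B * (P * real i / X)^2"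
  proof -
    have "pochhammer (real n) i * fact i \<le> (fact i * B) * fact i"
      using poch_le_fact[OF n, of i] fact_add_le[of i n] unfolding B_def
      by (intro mult_right_mono) auto
    also have "\<dots> = B * (fact i * fact i)" by simp
    also have "\<dots> \<le> B * ((P * real i / X) * (P * real i / X))"
      using f1 Bp Pp Xp ip by (intro mult_left_mono mult_mono) auto
    finally show ?thesis by (simp add: power2_eq_square)
  qed
  have num: "P^2 \<le> (z^2)^i"
  proof -
    have "P^2 = (real i ^ 2)^i" unfolding P_def by (simp add: power_mult[symmetric] mult.commute)
    also have "\<dots> \<le> (z^2)^i" using iz ip by (intro power_mono) auto
    finally show ?thesis .
  qed
  have "P^2 / (B * (P * real i / X)^2) \<le> (z^2)^i / (pochhammer (real n) i * fact i)"
    using num D1 pp fp Pp Bp by (intro frac_le) auto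
  moreover have "P^2 / (B * (P * real i / X)^2) = X^2 / (B * real i ^ 2)"
    using Pp Xp ip by (simp add: field_simps power2_eq_square)
  moreover have "exp (2*z - 4) / (z^2 * (z + real n)^n) \<le> X^2 / (B * real i ^ 2)"
  proof (rule frac_le)
    show "0 \<le> X^2" by simp
    have "X^2 = exp (2 * real i - 2)" unfolding X_def by (simp add: power2_eq_square exp_add[symmetric])
    then show "exp (2*z - 4) \<le> X^2" using iz by simp
    show "0 < B * real i ^ 2" using Bp ip by simp
    show "B * real i ^ 2 \<le> z^2 * (z + real n)^n"
      unfolding B_def using iz ip by (subst mult.commute, intro mult_mono power_mono) auto
  qed
  ultimately show ?thesis using t by linarith
qed

lemma x1_lower: assumes n: "n \<ge> 1" and psi: "\<psi> > 0" and z: "\<psi> * t \<ge> 1"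
  shows "vfun n \<psi> t \<ge> exp (-4) / ((\<psi>*t)^2 * (\<psi>*t + real n)^n)"
proof -
  have "vfun n \<psi> t = exp (- (2*(\<psi>*t))) * hyp0F1 (real n) ((\<psi>*t)^2)"
    unfolding vfun_def by (simp add: algebra_simps power_mult_distrib)
  also have "\<dots> \<ge> exp (- (2*(\<psi>*t))) * (exp (2*(\<psi>*t) - 4) / ((\<psi>*t)^2 * (\<psi>*t + real n)^n))"
    using F0_lower[OF n z] by (intro mult_left_mono) auto
  finally show ?thesis by (simp add: exp_add[symmetric] mult.assoc[symmetric] )
qed


definition antid :: "(real \<Rightarrow> real) \<Rightarrow> real \<Rightarrow> real" where
  "antid f x = integral {1..x} f - integral {x..1} f"

lemma antid_1: "antid f 1 = 0"
  unfolding antid_def by simp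

lemma antid_deriv:
  assumes cf: "\<And>x. x > 0 \<Longrightarrow> isCont f x" and x: "x > 0"
  shows "(antid f has_real_derivative f x) (at x)"
proof -
  define a where "a = min x 1 / 2"
  define b where "b = max x 1 + 1"
  have ab: "0 < a" "a < x" "x < b" "a < 1" "1 < b" unfolding a_def b_def using x by auto
  have cont: "continuous_on {a..b} f"
    using cf ab by (intro continuous_at_imp_continuous_on) auto
  have int: "f integrable_on {c..d}" if "a \<le> c" "d \<le> b" for c d
  proof (cases "c \<le> d")
    case True
    then show ?thesis using integrable_subinterval_real[OF integrable_continuous_real[OF cont], of c d] that by auto
  next
    case False
    then show ?thesis by (simp add: integrable_on_empty)
  qed
  define G where "G y = integral {a..y} f - integral {a..1} f" for y
  have "(G has_real_derivative f x) (at x within {a..b})"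
    unfolding G_def using integral_has_real_derivative[OF cont, of x] ab
    by (auto intro!: derivative_eq_intros)
  moreover have "at x within {a..b} = at x" using ab by (intro at_within_interior) auto
  ultimately have dG: "(G has_real_derivative f x) (at x)" by simp
  have eq: "G y = antid f y" if "y \<in> {a<..<b}" for y
  proof (cases "y \<ge> 1")
    case True
    have "integral {a..1} f + integral {1..y} f = integral {a..y} f"
      using True ab that by (intro Henstock_Kurzweil_Integration.integral_combine int) auto
    moreover have "integral {y..1} f = 0"
    proof (cases "y = 1")
      case True then show ?thesis by simp
    next
      case False then show ?thesis using \<open>y \<ge> 1\<close> by simp
    qed
    ultimately show ?thesis unfolding G_def antid_def by simp
  next
    case False
    have "integral {a..y} f + integral {y..1} f = integral {a..1} f"
      using False ab that by (intro Henstock_Kurzweil_Integration.integral_combine int) auto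
    moreover have "integral {1..y} f = 0" using False by simp
    ultimately show ?thesis unfolding G_def antid_def by simp
  qed
  show ?thesis
    by (rule has_field_derivative_transform_within_open[OF dG, of "{a<..<b}"]) (use ab eq in auto)
qed

definition Ew :: "nat \<Rightarrow> real \<Rightarrow> real \<Rightarrow> real" where
  "Ew n \<psi> t = exp (-4*\<psi>*t - (2*real n - 2) * ln t)"

lemma Ew_pos: "Ew n \<psi> t > 0" unfolding Ew_def by simp

lemma Ew_deriv: "t > 0 \<Longrightarrow> (Ew n \<psi> has_real_derivative bet n \<psi> t * Ew n \<psi> t) (at t)"
  unfolding Ew_def[abs_def] bet_def
  by (auto intro!: derivative_eq_intros simp: field_simps)

lemma decay: assumes n: "n \<ge> 1" and psi: "\<psi> > 0"
  shows "\<exists>T\<ge>1. \<forall>t\<ge>T. t * Ew n \<psi> t \<le> (vfun n \<psi> t)^2"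
proof -
  define m where "m = 2*n+5"
  define C where "C = exp 8 * 4^n / \<psi>"
  have Cp: "C > 0" unfolding C_def using psi by simp
  have "eventually (\<lambda>s. s^m / exp s < 1/C) at_top"
    using order_tendstoD(2)[OF tendsto_power_div_exp_0[of m], of "1/C"] Cp by simp
  then obtain S where S: "\<And>s. s \<ge> S \<Longrightarrow> s^m / exp s < 1/C"
    by (auto simp: eventually_at_top_linorder)
  define T where "T = max 1 (max (S/\<psi>) (max (real n/\<psi>) (1/\<psi>)))"
  have "\<forall>t\<ge>T. t * Ew n \<psi> t \<le> (vfun n \<psi> t)^2"
  proof (intro allI impI)
    fix t assume tT: "t \<ge> T"
    define z where "z = \<psi> * t"
    have t1: "t \<ge> 1" using tT unfolding T_def by simp
    have zS: "z \<ge> S" "z \<ge> real n" "z \<ge> 1"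
      using tT psi unfolding T_def z_def by (auto simp: field_simps)
    have zp: "z > 0" using zS by simp
    define W where "W = z^(2*n+4)"
    have Wp: "W > 0" unfolding W_def using zp by simp
    have h1: "z * W / exp z < 1/C" using S[OF zS(1)] unfolding m_def W_def by (simp add: power_Suc[symmetric] power_add[symmetric] add.commute)
    have h2: "t * Ew n \<psi> t \<le> (z/\<psi>) / exp z"
    proof -
      have "Ew n \<psi> t \<le> exp (-4*z)"
        unfolding Ew_def z_def using t1 n by (auto intro!: mult_nonneg_nonneg)
      also have "\<dots> \<le> exp (-z)" using zp by simp
      finally have "t * Ew n \<psi> t \<le> t * exp (-z)" using t1 by (intro mult_left_mono) auto
      also have "\<dots> = (z/\<psi>) / exp z" unfolding z_def using psi by (simp add: exp_minus' field_simps)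
      finally show ?thesis .
    qed
    have h3: "(z/\<psi>) / exp z \<le> (1 / exp 8) / (4^n * W)"
      using h1 Cp psi Wp zp unfolding C_def by (simp add: field_simps)
    define L where "L = exp (-4) / (z^2 * (z + real n)^n)"
    have Lp: "L > 0" unfolding L_def using zp zS by simp
    have h4: "(1 / exp 8) / (4^n * W) \<le> L^2"
    proof -
      have e1: "exp (-4::real)^2 = 1 / exp 8" by (simp add: power2_eq_square exp_add[symmetric] exp_minus')
      have e2: "(z^2)^2 = z^4" by (simp add: power_mult[symmetric])
      have e3: "((z + real n)^n)^2 = (z + real n)^(2*n)" by (simp add: power_mult[symmetric] mult.commute)
      have "L^2 = exp (-4)^2 / ((z^2)^2 * ((z + real n)^n)^2)" unfolding L_def by (simp add: power_divide power_mult_distrib)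
      then have "L^2 = (1 / exp 8) / (z^4 * (z + real n)^(2*n))" unfolding e1 e2 e3 .
      moreover have "z^4 * (z + real n)^(2*n) \<le> 4^n * W"
      proof -
        have "(z + real n)^(2*n) \<le> (2*z)^(2*n)" using zS by (intro power_mono) auto
        also have "\<dots> = 4^n * z^(2*n)" by (simp add: power_mult_distrib power_mult)
        finally have "z^4 * (z + real n)^(2*n) \<le> z^4 * (4^n * z^(2*n))" using zp by (intro mult_left_mono) auto
        also have "\<dots> = 4^n * W" unfolding W_def by (simp add: power_add mult_ac)
        finally show ?thesis .
      qed
      moreover have "0 < z^4 * (z + real n)^(2*n)" using zp zS by simp
      ultimately show ?thesis using Wp by (auto intro!: divide_left_mono mult_pos_pos)
    qed
    have h5: "L^2 \<le> (vfun n \<psi> t)^2"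
      using x1_lower[OF n psi] zS Lp unfolding L_def z_def by (intro power_mono) auto
    show "t * Ew n \<psi> t \<le> (vfun n \<psi> t)^2" using h2 h3 h4 h5 by linarith
  qed
  moreover have "T \<ge> 1" unfolding T_def by simp
  ultimately show ?thesis by blast
qed


definition "Rf n \<psi> = antid (\<lambda>s. Ew n \<psi> s / (s * (vfun n \<psi> s)^2))"
definition "x2 n \<psi> t = vfun n \<psi> t * Rf n \<psi> t"
definition "y2 n \<psi> t = y1 n \<psi> t * Rf n \<psi> t + Ew n \<psi> t / vfun n \<psi> t"
definition "Af k n \<psi> = antid (\<lambda>s. acoef k \<psi> s * x2 n \<psi> s)"
definition F2r :: "nat \<Rightarrow> nat \<Rightarrow> real \<Rightarrow> real \<Rightarrow> real^3" where
  "F2r k n \<psi> t = vector [Af k n \<psi> t, x2 n \<psi> t, y2 n \<psi> t]"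

context
  fixes k n :: nat and \<psi> :: real
  assumes n: "n \<ge> 1" and psi: "\<psi> > 0"
begin

lemma x1_pos: "vfun n \<psi> t > 0"
  unfolding vfun_def using hyp_ge1[of "real n" "t^2*\<psi>^2"] n by (auto intro!: mult_pos_pos)

lemma x1_cont: "isCont (vfun n \<psi>) t"
  using vfun_deriv[OF n] DERIV_isCont by blast

lemma v1d_eq: "t > 0 \<Longrightarrow> v1d n \<psi> t = y1 n \<psi> t / t"
  using y1_v1d[of n \<psi> t] by simp

lemma x1_deriv: "t > 0 \<Longrightarrow> (vfun n \<psi> has_real_derivative y1 n \<psi> t / t) (at t)"
  using vfun_deriv[OF n, of \<psi> t] v1d_eq by simp

lemma y1_deriv': "t > 0 \<Longrightarrow> (y1 n \<psi> has_real_derivative alph n \<psi> t * vfun n \<psi> t + bet n \<psi> t * y1 n \<psi> t) (at t)"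
  using y1_deriv[OF n] by blast

lemma y1_cont: "t > 0 \<Longrightarrow> isCont (y1 n \<psi>) t"
  using y1_deriv' DERIV_isCont by blast

lemma Ew_cont: "t > 0 \<Longrightarrow> isCont (Ew n \<psi>) t"
  using Ew_deriv DERIV_isCont by blast

lemma Rf_deriv: "t > 0 \<Longrightarrow> (Rf n \<psi> has_real_derivative Ew n \<psi> t / (t * (vfun n \<psi> t)^2)) (at t)"
  unfolding Rf_def
proof (rule antid_deriv)
  fix s :: real assume s: "s > 0"
  show "isCont (\<lambda>s. Ew n \<psi> s / (s * (vfun n \<psi> s)^2)) s"
    using s x1_pos[of s] by (intro continuous_intros Ew_cont x1_cont) auto
qed

lemma Rf_1: "Rf n \<psi> 1 = 0" unfolding Rf_def by (rule antid_1)

lemma x2_deriv: assumes t: "t > 0" shows "(x2 n \<psi> has_real_derivative y2 n \<psi> t / t) (at t)"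
proof -
  have d: "(x2 n \<psi> has_real_derivative y1 n \<psi> t / t * Rf n \<psi> t + Ew n \<psi> t / (t * (vfun n \<psi> t)^2) * vfun n \<psi> t) (at t)"
    unfolding x2_def[abs_def] using DERIV_mult[OF x1_deriv[OF t] Rf_deriv[OF t]] .
  have p: "vfun n \<psi> t \<noteq> 0" using x1_pos[of t] by simp
  show ?thesis
    by (rule DERIV_cong[OF d]) (use t p in \<open>simp add: y2_def field_simps power2_eq_square\<close>)
qed

lemma x2_cont: "t > 0 \<Longrightarrow> isCont (x2 n \<psi>) t"
  using x2_deriv DERIV_isCont by blast

lemma y2_deriv: assumes t: "t > 0"
  shows "(y2 n \<psi> has_real_derivative alph n \<psi> t * x2 n \<psi> t + bet n \<psi> t * y2 n \<psi> t) (at t)"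
proof -
  have p: "vfun n \<psi> t \<noteq> 0" using x1_pos[of t] by simp
  have d1: "((\<lambda>t. y1 n \<psi> t * Rf n \<psi> t) has_real_derivative
      (alph n \<psi> t * vfun n \<psi> t + bet n \<psi> t * y1 n \<psi> t) * Rf n \<psi> t
      + Ew n \<psi> t / (t * (vfun n \<psi> t)^2) * y1 n \<psi> t) (at t)"
    using DERIV_mult[OF y1_deriv'[OF t] Rf_deriv[OF t]] .
  have d2: "((\<lambda>t. Ew n \<psi> t / vfun n \<psi> t) has_real_derivative
      (bet n \<psi> t * Ew n \<psi> t * vfun n \<psi> t - Ew n \<psi> t * (y1 n \<psi> t / t)) / (vfun n \<psi> t * vfun n \<psi> t)) (at t)"
    using DERIV_divide[OF Ew_deriv[OF t] x1_deriv[OF t] p] .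
  have d: "(y2 n \<psi> has_real_derivative
      ((alph n \<psi> t * vfun n \<psi> t + bet n \<psi> t * y1 n \<psi> t) * Rf n \<psi> t
      + Ew n \<psi> t / (t * (vfun n \<psi> t)^2) * y1 n \<psi> t) +
      (bet n \<psi> t * Ew n \<psi> t * vfun n \<psi> t - Ew n \<psi> t * (y1 n \<psi> t / t)) / (vfun n \<psi> t * vfun n \<psi> t)) (at t)"
    unfolding y2_def[abs_def] using DERIV_add[OF d1 d2] .
  show ?thesis
    by (rule DERIV_cong[OF d]) (use t p in \<open>simp add: y2_def x2_def field_simps power2_eq_square\<close>)
qed

lemma y2_cont: "t > 0 \<Longrightarrow> isCont (y2 n \<psi>) t"
  using y2_deriv DERIV_isCont by blast

lemma Af_deriv: "t > 0 \<Longrightarrow> (Af k n \<psi> has_real_derivative acoef k \<psi> t * x2 n \<psi> t) (at t)"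
  unfolding Af_def
proof (rule antid_deriv)
  fix s :: real assume s: "s > 0"
  show "isCont (\<lambda>s. acoef k \<psi> s * x2 n \<psi> s) s"
    unfolding acoef_def using s by (intro continuous_intros x2_cont) auto
qed

lemma Af_1: "Af k n \<psi> 1 = 0" unfolding Af_def by (rule antid_1)

lemma F2r_sol: "F2r k n \<psi> \<in> sol_space (sysM k n \<psi>)"
  unfolding F2r_def[abs_def]
  by (rule in_sol_space) (auto intro: Af_deriv x2_deriv y2_deriv)

lemma e1_sol: "(\<lambda>t. vector [c, 0, 0] :: real^3) \<in> sol_space (sysM k n \<psi>)"
  using in_sol_space[of "\<lambda>t. c" k \<psi> "\<lambda>t. 0" "\<lambda>t. 0" n] by simp

lemma span:
  assumes g: "g \<in> sol_space (sysM k n \<psi>)"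
  shows "\<exists>c d e. \<forall>t>0. g t = d *\<^sub>R gsol k n \<psi> t + c *\<^sub>R F2r k n \<psi> t + e *\<^sub>R vector [1,0,0]"
proof -
  define u where "u t = g t $ 1" for t
  define x where "x t = g t $ 2" for t
  define y where "y t = g t $ 3" for t
  have du: "(u has_real_derivative acoef k \<psi> t * x t) (at t)" if "t > 0" for t
    unfolding u_def[abs_def] x_def using sol_space_comp(1)[OF g that] .
  have dx: "(x has_real_derivative y t / t) (at t)" if "t > 0" for t
    unfolding y_def x_def[abs_def] using sol_space_comp(2)[OF g that] .
  have dy: "(y has_real_derivative alph n \<psi> t * x t + bet n \<psi> t * y t) (at t)" if "t > 0" for t
    unfolding y_def[abs_def] x_def using sol_space_comp(3)[OF g that] .
  define Q where "Q t = (vfun n \<psi> t * y t - x t * y1 n \<psi> t) / Ew n \<psi> t" for t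
  have dQ: "(Q has_real_derivative 0) (at t)" if t: "t > 0" for t
  proof -
    have dW: "((\<lambda>t. vfun n \<psi> t * y t - x t * y1 n \<psi> t) has_real_derivative
       (y1 n \<psi> t / t * y t + (alph n \<psi> t * x t + bet n \<psi> t * y t) * vfun n \<psi> t) -
       (y t / t * y1 n \<psi> t + (alph n \<psi> t * vfun n \<psi> t + bet n \<psi> t * y1 n \<psi> t) * x t)) (at t)"
      using DERIV_diff[OF DERIV_mult[OF x1_deriv[OF t] dy[OF t]] DERIV_mult[OF dx[OF t] y1_deriv'[OF t]]] .
    have ne: "Ew n \<psi> t \<noteq> 0" using Ew_pos[of n \<psi> t] by simp
    show ?thesis unfolding Q_def[abs_def]
      by (rule DERIV_cong[OF DERIV_divide[OF dW Ew_deriv[OF t] ne]]) (use t ne in \<open>simp add: field_simps\<close>)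
  qed
  obtain c where c: "\<And>t. t \<in> {0<..} \<Longrightarrow> Q t = c"
    using has_field_derivative_zero_constant[of "{0<..}" Q] dQ
    by (metis convex_real_interval(3) greaterThan_iff has_field_derivative_at_within)
  have hy: "y t = (c * Ew n \<psi> t + x t * y1 n \<psi> t) / vfun n \<psi> t" if t: "t > 0" for t
  proof -
    have "Q t = c" using c t by simp
    then show ?thesis unfolding Q_def using Ew_pos[of n \<psi> t] x1_pos[of t] by (simp add: field_simps)
  qed
  define P where "P t = x t / vfun n \<psi> t - c * Rf n \<psi> t" for t
  have dP: "(P has_real_derivative 0) (at t)" if t: "t > 0" for t
  proof -
    have ne: "vfun n \<psi> t \<noteq> 0" using x1_pos[of t] by simp
    show ?thesis unfolding P_def[abs_def]
      by (rule DERIV_cong[OF DERIV_diff[OF DERIV_divide[OF dx[OF t] x1_deriv[OF t] ne] DERIV_cmult[OF Rf_deriv[OF t]]]])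
        (use t ne hy[OF t] in \<open>simp add: field_simps power2_eq_square\<close>)
  qed
  obtain d where d: "\<And>t. t \<in> {0<..} \<Longrightarrow> P t = d"
    using has_field_derivative_zero_constant[of "{0<..}" P] dP
    by (metis convex_real_interval(3) greaterThan_iff has_field_derivative_at_within)
  have hx: "x t = d * vfun n \<psi> t + c * x2 n \<psi> t" if t: "t > 0" for t
  proof -
    have "P t = d" using d t by simp
    then show ?thesis unfolding P_def x2_def using x1_pos[of t] by (simp add: field_simps)
  qed
  have hy2: "y t = d * y1 n \<psi> t + c * y2 n \<psi> t" if t: "t > 0" for t
    unfolding hy[OF t] hx[OF t] y2_def x2_def using x1_pos[of t] by (simp add: field_simps)
  define U where "U t = u t - d * H1 k n \<psi> t - c * Af k n \<psi> t" for t
  have dU: "(U has_real_derivative 0) (at t)" if t: "t > 0" for t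
    unfolding U_def[abs_def]
    by (rule DERIV_cong[OF DERIV_diff[OF DERIV_diff[OF du[OF t] DERIV_cmult[OF H1_deriv[OF n t]]] DERIV_cmult[OF Af_deriv[OF t]]]])
      (use hx[OF t] in \<open>simp add: algebra_simps\<close>)
  obtain e where e: "\<And>t. t \<in> {0<..} \<Longrightarrow> U t = e"
    using has_field_derivative_zero_constant[of "{0<..}" U] dU
    by (metis convex_real_interval(3) greaterThan_iff has_field_derivative_at_within)
  have "g t = d *\<^sub>R gsol k n \<psi> t + c *\<^sub>R F2r k n \<psi> t + e *\<^sub>R vector [1,0,0]" if t: "t > 0" for t
  proof -
    have hu: "u t = e + d * H1 k n \<psi> t + c * Af k n \<psi> t" using e[of t] t unfolding U_def by simp
    show ?thesis unfolding vec_eq_iff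
    proof
      fix i :: 3
      show "g t $ i = (d *\<^sub>R gsol k n \<psi> t + c *\<^sub>R F2r k n \<psi> t + e *\<^sub>R vector [1,0,0]) $ i"
        using exhaust_3[of i] hu hx[OF t] hy2[OF t] unfolding u_def x_def y_def
        by (auto simp: gsol_eq[OF n] F2r_def)
    qed
  qed
  then show ?thesis by blast
qed

lemma acoef_pos: "t > 0 \<Longrightarrow> acoef k \<psi> t > 0"
  unfolding acoef_def by simp

lemma Rf_mono: assumes "0 < a" "a \<le> b" shows "Rf n \<psi> a \<le> Rf n \<psi> b"
proof (rule DERIV_nonneg_imp_nondecreasing[OF assms(2)])
  fix x assume x: "a \<le> x" "x \<le> b"
  have xp: "x > 0" using x assms by simp
  have "Ew n \<psi> x / (x * (vfun n \<psi> x)^2) \<ge> 0"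
    using Ew_pos[of n \<psi> x] xp x1_pos[of x] by simp
  then show "\<exists>y. (Rf n \<psi> has_real_derivative y) (at x) \<and> y \<ge> 0"
    using Rf_deriv[OF xp] by blast
qed

lemma Rf_nonneg: "t \<ge> 1 \<Longrightarrow> Rf n \<psi> t \<ge> 0"
  using Rf_mono[of 1 t] Rf_1 by simp

lemma x2_nonneg: "t \<ge> 1 \<Longrightarrow> x2 n \<psi> t \<ge> 0"
  unfolding x2_def using Rf_nonneg x1_pos by (simp add: less_imp_le)

lemma H1_mono: assumes "0 < a" "a \<le> b" shows "H1 k n \<psi> a \<le> H1 k n \<psi> b"
proof (rule DERIV_nonneg_imp_nondecreasing[OF assms(2)])
  fix x assume x: "a \<le> x" "x \<le> b"
  have xp: "x > 0" using x assms by simp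
  have "acoef k \<psi> x * vfun n \<psi> x \<ge> 0"
    using acoef_pos[OF xp] x1_pos[of x] by simp
  then show "\<exists>y. (H1 k n \<psi> has_real_derivative y) (at x) \<and> y \<ge> 0"
    using H1_deriv[OF n xp] by blast
qed

lemma H1_nonneg: "t \<ge> 0 \<Longrightarrow> H1 k n \<psi> t \<ge> 0"
  unfolding H1_def using H_nonneg[OF n] by simp

lemma H1_1_pos: "H1 k n \<psi> 1 > 0"
proof -
  have "H1 k n \<psi> (1/2) < H1 k n \<psi> 1"
  proof (rule DERIV_pos_imp_increasing[of "1/2" 1 "H1 k n \<psi>"])
    fix x :: real assume x: "1/2 \<le> x" "x \<le> 1"
    have xp: "x > 0" using x by simp
    have "acoef k \<psi> x * vfun n \<psi> x > 0" using acoef_pos[OF xp] x1_pos[of x] by simp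
    then show "\<exists>y. (H1 k n \<psi> has_real_derivative y) (at x) \<and> y > 0"
      using H1_deriv[OF n xp] by blast
  qed simp
  then show ?thesis using H1_nonneg[of "1/2"] by simp
qed

lemma Af_mono: assumes "1 \<le> a" "a \<le> b" shows "Af k n \<psi> a \<le> Af k n \<psi> b"
proof (rule DERIV_nonneg_imp_nondecreasing[OF assms(2)])
  fix x assume x: "a \<le> x" "x \<le> b"
  have xp: "x > 0" using x assms by simp
  have "acoef k \<psi> x * x2 n \<psi> x \<ge> 0"
    using acoef_pos[OF xp] x2_nonneg[of x] x assms by simp
  then show "\<exists>y. (Af k n \<psi> has_real_derivative y) (at x) \<and> y \<ge> 0"
    using Af_deriv[OF xp] by blast
qed

lemma bounds: "\<exists>T\<ge>1. \<exists>Rm\<ge>0. \<forall>t\<ge>T. norm (F2r k n \<psi> t) \<le> (3*Rm+1) * norm (gsol k n \<psi> t)"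
proof -
  obtain T where T1: "T \<ge> 1" and T: "\<And>t. t \<ge> T \<Longrightarrow> t * Ew n \<psi> t \<le> (vfun n \<psi> t)^2"
    using decay[OF n psi] by blast
  define Rm where "Rm = Rf n \<psi> T + 1"
  have Rm0: "Rm \<ge> 0" unfolding Rm_def using Rf_nonneg[OF T1] by simp
  have Rle: "Rf n \<psi> t \<le> Rm" if t: "t \<ge> 1" for t
  proof (cases "t \<le> T")
    case True then show ?thesis using Rf_mono[of t T] t unfolding Rm_def by simp
  next
    case False
    have "Rf n \<psi> t + 1/t \<le> Rf n \<psi> T + 1/T"
    proof (rule DERIV_nonpos_imp_nonincreasing[of T t "\<lambda>s. Rf n \<psi> s + 1/s"])
      show "T \<le> t" using False by simp
      fix s assume s: "T \<le> s" "s \<le> t"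
      have sp: "s > 0" using s T1 by simp
      have d: "((\<lambda>s. Rf n \<psi> s + 1/s) has_real_derivative Ew n \<psi> s / (s * (vfun n \<psi> s)^2) + (- 1 / s^2)) (at s)"
        using sp by (auto intro!: derivative_eq_intros Rf_deriv simp: power2_eq_square field_simps)
      have Ts: "Ew n \<psi> s * s \<le> vfun n \<psi> s * vfun n \<psi> s"
        using T[of s] s by (simp add: mult.commute power2_eq_square)
      have le: "Ew n \<psi> s / (s * (vfun n \<psi> s)^2) \<le> 1 / s^2"
        using Ts sp x1_pos[of s] by (simp add: divide_simps power2_eq_square mult.assoc)
      show "\<exists>y. ((\<lambda>s. Rf n \<psi> s + 1/s) has_real_derivative y) (at s) \<and> y \<le> 0"
      proof (intro exI conjI)
        show "((\<lambda>s. Rf n \<psi> s + 1/s) has_real_derivative Ew n \<psi> s / (s * (vfun n \<psi> s)^2) + (- 1 / s^2)) (at s)"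
          by (rule d)
        show "Ew n \<psi> s / (s * (vfun n \<psi> s)^2) + (- 1 / s^2) \<le> 0" using le by linarith
      qed
    qed
    moreover have "1/T \<le> 1" "1/t \<ge> 0" using T1 t by auto
    ultimately show ?thesis unfolding Rm_def by linarith
  qed
  have Af0: "Af k n \<psi> t \<ge> 0" if "t \<ge> 1" for t using Af_mono[of 1 t] Af_1 that by simp
  have AfH: "Af k n \<psi> t \<le> Rm * H1 k n \<psi> t" if t: "t \<ge> 1" for t
  proof -
    have "(\<lambda>s. Rm * H1 k n \<psi> s - Af k n \<psi> s) 1 \<le> (\<lambda>s. Rm * H1 k n \<psi> s - Af k n \<psi> s) t"
    proof (rule DERIV_nonneg_imp_nondecreasing[OF t])
      fix s assume s: "1 \<le> s" "s \<le> t"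
      have sp: "s > 0" using s by simp
      have d: "((\<lambda>s. Rm * H1 k n \<psi> s - Af k n \<psi> s) has_real_derivative
          Rm * (acoef k \<psi> s * vfun n \<psi> s) - acoef k \<psi> s * x2 n \<psi> s) (at s)"
        using DERIV_diff[OF DERIV_cmult[OF H1_deriv[OF n sp]] Af_deriv[OF sp]] .
      have "Rm * (acoef k \<psi> s * vfun n \<psi> s) - acoef k \<psi> s * x2 n \<psi> s
            = acoef k \<psi> s * vfun n \<psi> s * (Rm - Rf n \<psi> s)"
        unfolding x2_def by (simp add: algebra_simps)
      also have "\<dots> \<ge> 0" using Rle[of s] s acoef_pos[OF sp] x1_pos[of s]
        by (intro mult_nonneg_nonneg) auto
      finally show "\<exists>y. ((\<lambda>s. Rm * H1 k n \<psi> s - Af k n \<psi> s) has_real_derivative y) (at s) \<and> y \<ge> 0"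
        using d by blast
    qed
    then have h: "Rm * H1 k n \<psi> 1 - Af k n \<psi> 1 \<le> Rm * H1 k n \<psi> t - Af k n \<psi> t" by simp
    have "Rm * H1 k n \<psi> 1 \<ge> 0" using H1_nonneg[of 1] Rm0 by simp
    then show ?thesis using h Af_1 by linarith
  qed
  have "\<forall>t\<ge>T. norm (F2r k n \<psi> t) \<le> (3*Rm+1) * norm (gsol k n \<psi> t)"
  proof (intro allI impI)
    fix t assume tT: "t \<ge> T"
    have t1: "t \<ge> 1" using tT T1 by simp
    define N where "N = norm (gsol k n \<psi> t)"
    have nH: "\<bar>H1 k n \<psi> t\<bar> \<le> N" unfolding N_def using component_le_norm_cart[of "gsol k n \<psi> t" 1]
      by (simp add: gsol_eq[OF n])
    have nx: "vfun n \<psi> t \<le> N" unfolding N_def using component_le_norm_cart[of "gsol k n \<psi> t" 2]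
      by (simp add: gsol_eq[OF n])
    have ny: "\<bar>y1 n \<psi> t\<bar> \<le> N" unfolding N_def using component_le_norm_cart[of "gsol k n \<psi> t" 3]
      by (simp add: gsol_eq[OF n])
    have xp: "vfun n \<psi> t > 0" using x1_pos .
    have R0: "0 \<le> Rf n \<psi> t" "Rf n \<psi> t \<le> Rm" using Rf_nonneg[OF t1] Rle[OF t1] by auto
    have c1: "\<bar>Af k n \<psi> t\<bar> \<le> Rm * N"
    proof -
      have "H1 k n \<psi> t \<le> N" using nH by simp
      then have "Rm * H1 k n \<psi> t \<le> Rm * N" using Rm0 by (intro mult_left_mono) auto
      then show ?thesis using Af0[OF t1] AfH[OF t1] by simp
    qed
    have c2: "\<bar>x2 n \<psi> t\<bar> \<le> Rm * N"
    proof -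
      have "\<bar>x2 n \<psi> t\<bar> = vfun n \<psi> t * Rf n \<psi> t" unfolding x2_def using xp R0 by simp
      also have "\<dots> \<le> N * Rm" using nx R0 xp by (intro mult_mono) auto
      finally show ?thesis by (simp add: mult.commute)
    qed
    have EW: "Ew n \<psi> t / vfun n \<psi> t \<le> vfun n \<psi> t"
    proof -
      have "Ew n \<psi> t \<le> t * Ew n \<psi> t" using t1 Ew_pos[of n \<psi> t] by simp
      also have "\<dots> \<le> (vfun n \<psi> t)^2" using T tT by simp
      finally show ?thesis using xp by (simp add: divide_simps power2_eq_square)
    qed
    have c3: "\<bar>y2 n \<psi> t\<bar> \<le> Rm * N + N"
    proof -
      have "\<bar>y2 n \<psi> t\<bar> \<le> \<bar>y1 n \<psi> t\<bar> * Rf n \<psi> t + Ew n \<psi> t / vfun n \<psi> t"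
      proof -
        have "\<bar>y2 n \<psi> t\<bar> \<le> \<bar>y1 n \<psi> t * Rf n \<psi> t\<bar> + \<bar>Ew n \<psi> t / vfun n \<psi> t\<bar>"
          unfolding y2_def by (rule abs_triangle_ineq)
        also have "\<bar>y1 n \<psi> t * Rf n \<psi> t\<bar> = \<bar>y1 n \<psi> t\<bar> * Rf n \<psi> t" using R0 by (simp add: abs_mult)
        also have "\<bar>Ew n \<psi> t / vfun n \<psi> t\<bar> = Ew n \<psi> t / vfun n \<psi> t"
          using xp Ew_pos[of n \<psi> t] by simp
        finally show ?thesis .
      qed
      also have "\<dots> \<le> N * Rm + N" using ny R0 EW nx by (intro add_mono mult_mono) auto
      finally show ?thesis by (simp add: mult.commute)
    qed
    have "norm (F2r k n \<psi> t) \<le> \<bar>Af k n \<psi> t\<bar> + \<bar>x2 n \<psi> t\<bar> + \<bar>y2 n \<psi> t\<bar>"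
      using norm_le_l1_cart[of "F2r k n \<psi> t"] unfolding sum_3 F2r_def by simp
    also have "\<dots> \<le> (3*Rm+1) * N"
    proof -
      have "(3*Rm+1) * N = Rm * N + Rm * N + (Rm * N + N)" by (simp add: algebra_simps)
      then show ?thesis using c1 c2 c3 by linarith
    qed
    finally show "norm (F2r k n \<psi> t) \<le> (3*Rm+1) * norm (gsol k n \<psi> t)" unfolding N_def .
  qed
  then show ?thesis using T1 Rm0 by blast
qed

end


lemma sol_scale: assumes "f \<in> sol_space M" shows "(\<lambda>t. c *\<^sub>R f t) \<in> sol_space M"
  unfolding sol_space_def
proof (intro CollectI allI impI)
  fix t :: real assume t: "t > 0"
  have d: "(f has_vector_derivative (M t *v f t)) (at t)" using assms t unfolding sol_space_def by blast
  have "((\<lambda>t. c *\<^sub>R f t) has_vector_derivative (c *\<^sub>R (M t *v f t) + 0 *\<^sub>R f t)) (at t)"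
    by (rule has_vector_derivative_scaleR[OF DERIV_const d])
  then show "((\<lambda>t. c *\<^sub>R f t) has_vector_derivative M t *v (c *\<^sub>R f t)) (at t)"
    by (simp add: matrix_vector_mult_scaleR)
qed

lemma sum3: fixes f :: "nat \<Rightarrow> 'a::comm_monoid_add" shows "(\<Sum>j<3. f j) = f 0 + f 1 + f 2"
  by (simp add: eval_nat_numeral add.assoc)

theorem theorem5:
  fixes k n :: nat and \<psi> :: real
  assumes "n \<ge> 1" and "\<psi> > 0"
  shows "stabile (sysM k n \<psi>) (gsol k n \<psi>)"
proof -
  note n = assms(1) and psi = assms(2)
  obtain T Rm where T1: "T \<ge> 1" and Rm0: "Rm \<ge> 0"
    and B: "\<And>t. t \<ge> T \<Longrightarrow> norm (F2r k n \<psi> t) \<le> (3*Rm+1) * norm (gsol k n \<psi> t)"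
    using bounds[OF n psi, of k] by blast
  define \<epsilon> where "\<epsilon> = H1 k n \<psi> 1"
  have ep: "\<epsilon> > 0" unfolding \<epsilon>_def using H1_1_pos[OF n psi] .
  define \<kappa> where "\<kappa> = 1 / (3*Rm+1)"
  have kp: "\<kappa> > 0" unfolding \<kappa>_def using Rm0 by simp
  define F where "F j = (if j = 0 then gsol k n \<psi> else if j = 1 then (\<lambda>t. \<epsilon> *\<^sub>R (vector [1,0,0] :: real^3))
      else (\<lambda>t. \<kappa> *\<^sub>R F2r k n \<psi> t))" for j :: nat
  have F0: "F 0 = gsol k n \<psi>" "F 1 = (\<lambda>t. \<epsilon> *\<^sub>R vector [1,0,0])" "F 2 = (\<lambda>t. \<kappa> *\<^sub>R F2r k n \<psi> t)"
    unfolding F_def by auto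
  have j3: "j < 3 \<Longrightarrow> j = 0 \<or> j = 1 \<or> j = 2" for j :: nat by auto
  have x1p: "vfun n \<psi> t > 0" for t using x1_pos[OF n psi] .
  have gnz: "norm (gsol k n \<psi> t) > 0" for t
  proof -
    have "\<bar>gsol k n \<psi> t $ 2\<bar> \<le> norm (gsol k n \<psi> t)" by (rule component_le_norm_cart)
    moreover have "gsol k n \<psi> t $ 2 = vfun n \<psi> t" by (simp add: gsol_eq[OF n])
    ultimately have "vfun n \<psi> t \<le> norm (gsol k n \<psi> t)" by simp
    then show ?thesis using x1p[of t] by linarith
  qed
  have basis: "sol_basis (sysM k n \<psi>) 3 F"
    unfolding sol_basis_def
  proof (intro conjI allI impI ballI)
    fix j :: nat assume "j < 3"
    then show "F j \<in> sol_space (sysM k n \<psi>)"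
      using j3[of j] gsol_sol[OF n] sol_scale[OF e1_sol[OF n psi, of 1]] sol_scale[OF F2r_sol[OF n psi]]
      by (auto simp: F_def)
  next
    fix c :: "nat \<Rightarrow> real" and j :: nat
    assume h: "\<forall>t>0. (\<Sum>j<3. c j *\<^sub>R F j t) = 0" and j: "j < 3"
    have h1: "c 0 *\<^sub>R gsol k n \<psi> 1 + c 1 *\<^sub>R (\<epsilon> *\<^sub>R vector [1,0,0]) + c 2 *\<^sub>R (\<kappa> *\<^sub>R F2r k n \<psi> 1) = 0"
      using h[rule_format, of 1] by (simp add: sum3 F_def)
    have x21: "x2 n \<psi> 1 = 0" unfolding x2_def by (simp add: Rf_1[OF n psi])
    have y21: "y2 n \<psi> 1 > 0" unfolding y2_def using Rf_1[OF n psi] Ew_pos[of n \<psi> 1] x1p[of 1] by simp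
    have "(c 0 *\<^sub>R gsol k n \<psi> 1 + c 1 *\<^sub>R (\<epsilon> *\<^sub>R vector [1,0,0]) + c 2 *\<^sub>R (\<kappa> *\<^sub>R F2r k n \<psi> 1)) $ 2 = 0"
      using h1 by simp
    then have "c 0 * vfun n \<psi> 1 = 0" by (simp add: gsol_eq[OF n] F2r_def x21)
    then have c0: "c 0 = 0" using x1p[of 1] by simp
    have "(c 0 *\<^sub>R gsol k n \<psi> 1 + c 1 *\<^sub>R (\<epsilon> *\<^sub>R vector [1,0,0]) + c 2 *\<^sub>R (\<kappa> *\<^sub>R F2r k n \<psi> 1)) $ 3 = 0"
      using h1 by simp
    then have "c 2 * (\<kappa> * y2 n \<psi> 1) = 0" by (simp add: gsol_eq[OF n] F2r_def c0)
    then have c2: "c 2 = 0" using kp y21 by simp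
    have "(c 0 *\<^sub>R gsol k n \<psi> 1 + c 1 *\<^sub>R (\<epsilon> *\<^sub>R vector [1,0,0]) + c 2 *\<^sub>R (\<kappa> *\<^sub>R F2r k n \<psi> 1)) $ 1 = 0"
      using h1 by simp
    then have "c 1 * \<epsilon> = 0" by (simp add: gsol_eq[OF n] F2r_def c0 c2)
    then have c1: "c 1 = 0" using ep by simp
    show "c j = 0" using j3[OF j] c0 c1 c2 by auto
  next
    fix g assume g: "g \<in> sol_space (sysM k n \<psi>)"
    obtain c d e where cde: "\<And>t. t > 0 \<Longrightarrow> g t = d *\<^sub>R gsol k n \<psi> t + c *\<^sub>R F2r k n \<psi> t + e *\<^sub>R vector [1,0,0]"
      using span[OF n psi g] by blast
    define co where "co j = (if j = 0 then d else if j = 1 then e / \<epsilon> else c / \<kappa>)" for j :: nat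
    have "\<forall>t>0. g t = (\<Sum>j<3. co j *\<^sub>R F j t)"
    proof (intro allI impI)
      fix t :: real assume t: "t > 0"
      show "g t = (\<Sum>j<3. co j *\<^sub>R F j t)"
        unfolding sum3 F0 co_def cde[OF t] using ep kp by (simp add: add_ac)
    qed
    then show "\<exists>c. \<forall>t>0. g t = (\<Sum>j<3. c j *\<^sub>R F j t)" by blast
  qed
  have dom: "\<forall>\<^sub>F t in at_top. \<forall>j<CARD(3). norm (F j t) \<le> norm (F 0 t)"
    unfolding eventually_at_top_linorder
  proof (intro exI allI impI)
    fix t j assume t: "t \<ge> T" and j: "j < CARD(3)"
    have t1: "t \<ge> 1" using t T1 by simp
    have "j = 0 \<or> j = 1 \<or> j = 2" using j3[of j] j by simp
    moreover have "norm (F 1 t) \<le> norm (F 0 t)"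
    proof -
      have "norm (vector [1,0,0] :: real^3) \<le> 1"
        using norm_le_l1_cart[of "vector [1,0,0] :: real^3"] by (simp add: sum_3)
      then have "norm (F 1 t) \<le> \<epsilon>" using ep by (simp add: F_def mult_left_le)
      also have "\<epsilon> \<le> H1 k n \<psi> t" unfolding \<epsilon>_def using H1_mono[OF n psi, of 1 t] t1 by simp
      also have "\<dots> \<le> norm (gsol k n \<psi> t)"
        using component_le_norm_cart[of "gsol k n \<psi> t" 1] by (simp add: gsol_eq[OF n])
      finally show ?thesis by (simp add: F_def)
    qed
    moreover have "norm (F 2 t) \<le> norm (F 0 t)"
    proof -
      have "norm (F 2 t) = \<kappa> * norm (F2r k n \<psi> t)" using kp by (simp add: F_def)
      also have "\<dots> \<le> \<kappa> * ((3*Rm+1) * norm (gsol k n \<psi> t))" using B[OF t] kp by (intro mult_left_mono) auto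
      also have "\<dots> = norm (gsol k n \<psi> t)" unfolding \<kappa>_def using Rm0 by simp
      finally show ?thesis by (simp add: F_def)
    qed
    ultimately show "norm (F j t) \<le> norm (F 0 t)" by auto
  qed
  have lim: "((\<lambda>t. norm (F 0 t) / norm (gsol k n \<psi> t)) \<longlongrightarrow> 1) at_top"
  proof -
    have "(\<lambda>t. norm (F 0 t) / norm (gsol k n \<psi> t)) = (\<lambda>t. 1)"
      using gnz by (auto simp: F_def fun_eq_iff)
    then show ?thesis by simp
  qed
  have "sol_basis (sysM k n \<psi>) CARD(3) F \<and> (0::nat) < CARD(3) \<and>
        (\<forall>\<^sub>F t in at_top. \<forall>j<CARD(3). norm (F j t) \<le> norm (F 0 t)) \<and>
        (\<exists>L::real. ((\<lambda>t. norm (F 0 t) / norm (gsol k n \<psi> t)) \<longlongrightarrow> L) at_top)"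
    using basis dom lim by auto
  then show ?thesis
    unfolding stabile_def using gsol_sol[OF n] by blast
qed

end
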